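(* Assume the Continuum Hypothesis. Let $X$ be a real Banach space with $\operatorname{dens} X = \operatorname{dens} X^* = \omega_1$. Then $X$ contains an overcomplete set which is dense in $X$.
   Context: $\operatorname{dens}$ denotes the density character. A subset $S$ of a Banach space $X$ with $|S| = \operatorname{dens} X$ is called overcomplete if every subset $\Lambda \subseteq S$ with $|\Lambda| = |S|$ is linearly dense in $X$. *)

theory Defs
  imports "HOL-Analysis.Analysis"
begin

text \<open>Cardinals are the wellorder relations of Main (BNF_Cardinal_Order_Relation):
  card_of A is the cardinal of A, =o / \<le>o compare cardinals, natLeq is omega,
  and cardSuc natLeq is omega_1.\<close>

definition omega1 :: "nat set rel" where
  "omega1 = cardSuc natLeq"

definition CH :: bool where
  "CH \<longleftrightarrow> (card_of (UNIV :: real set), omega1) \<in> ordIso"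

definition dens_is :: "'a::metric_space set \<Rightarrow> 'b rel \<Rightarrow> bool" where
  "dens_is X k \<longleftrightarrow>
     (\<exists>D. D \<subseteq> X \<and> X \<subseteq> closure D \<and> (card_of D, k) \<in> ordIso) \<and>
     (\<forall>D. D \<subseteq> X \<and> X \<subseteq> closure D \<longrightarrow> (k, card_of D) \<in> ordLeq)"

definition overcomplete :: "'a::real_normed_vector set \<Rightarrow> bool" where
  "overcomplete S \<longleftrightarrow>
     dens_is (UNIV :: 'a set) (card_of S) \<and>
     (\<forall>L. L \<subseteq> S \<and> (card_of L, card_of S) \<in> ordIso \<longrightarrow> closure (span L) = UNIV)"

end

theory Submission
  imports Defs "HOL-Library.Countable_Set_Type" "HOL-Library.Equipollence"
begin


definition lgraph :: "('a::real_vector \<times> real) set \<Rightarrow> bool" where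
 "lgraph G \<longleftrightarrow> (0,0) \<in> G \<and> (\<forall>x a z b. (x,a)\<in>G \<longrightarrow> (z,b)\<in>G \<longrightarrow> (x+z, a+b) \<in> G)
    \<and> (\<forall>x a t. (x,a)\<in>G \<longrightarrow> (t *\<^sub>R x, t*a) \<in> G) \<and> (\<forall>x a b. (x,a)\<in>G \<longrightarrow> (x,b)\<in>G \<longrightarrow> a=b)"

definition gext :: "('a::real_vector \<times> real) set \<Rightarrow> 'a \<Rightarrow> real \<Rightarrow> ('a \<times> real) set" where
 "gext G y c = {(x + t *\<^sub>R y, a + t*c) | x a t. (x,a)\<in>G}"

lemma lgraph_diff: "lgraph G \<Longrightarrow> (x,a)\<in>G \<Longrightarrow> (z,b)\<in>G \<Longrightarrow> (x - z, a - b) \<in> G"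
proof -
  assume G: "lgraph G" "(x,a)\<in>G" "(z,b)\<in>G"
  then have "((-1) *\<^sub>R z, (-1)*b) \<in> G" unfolding lgraph_def by blast
  with G have "(x + (-1) *\<^sub>R z, a + (-1)*b) \<in> G" unfolding lgraph_def by blast
  then show ?thesis by simp
qed

lemma gext_lgraph:
  assumes G: "lgraph G" and y: "y \<notin> Domain G"
  shows "lgraph (gext G y c)" "G \<subseteq> gext G y c" "(y, c) \<in> gext G y c"
proof -
  have G0: "(0,0) \<in> G" using G unfolding lgraph_def by blast
  have Gadd: "\<And>x a z b. (x,a)\<in>G \<Longrightarrow> (z,b)\<in>G \<Longrightarrow> (x+z, a+b) \<in> G" using G unfolding lgraph_def by blast
  have Gsc: "\<And>x a t. (x,a)\<in>G \<Longrightarrow> (t *\<^sub>R x, t*a) \<in> G" using G unfolding lgraph_def by blast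
  have Gfun: "\<And>x a b. (x,a)\<in>G \<Longrightarrow> (x,b)\<in>G \<Longrightarrow> a=b" using G unfolding lgraph_def by blast
  have uniq: "t = t' \<and> x = x' \<and> a = a'" if "(x,a)\<in>G" "(x',a')\<in>G" "x + t *\<^sub>R y = x' + t' *\<^sub>R y" for x a x' a' t t'
  proof -
    have tt: "t = t'"
    proof (rule ccontr)
      assume "t \<noteq> t'"
      have "(x - x', a - a') \<in> G" using lgraph_diff[OF G that(1,2)] .
      then have "((1/(t'-t)) *\<^sub>R (x - x'), (1/(t'-t)) * (a - a')) \<in> G" by (rule Gsc)
      moreover have "x - x' = (t' - t) *\<^sub>R y" using that(3) by (simp add: algebra_simps)
      ultimately have "(y, (1/(t'-t)) * (a - a')) \<in> G" using \<open>t \<noteq> t'\<close> by simp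
      then show False using y by blast
    qed
    then have "x = x'" using that(3) by simp
    then show ?thesis using tt Gfun that(1,2) by blast
  qed
  show "lgraph (gext G y c)"
    unfolding lgraph_def gext_def
  proof (intro conjI allI impI)
    show "(0::'a, 0::real) \<in> {(x + t *\<^sub>R y, a + t * c) |x a t. (x, a) \<in> G}"
      using G0 by force
  next
    fix x a z b
    assume "(x, a) \<in> {(x + t *\<^sub>R y, a + t * c) |x a t. (x, a) \<in> G}"
       "(z, b) \<in> {(x + t *\<^sub>R y, a + t * c) |x a t. (x, a) \<in> G}"
    then obtain x1 a1 t1 x2 a2 t2 where "(x1,a1)\<in>G" "(x2,a2)\<in>G" "x = x1 + t1 *\<^sub>R y" "a = a1 + t1*c"
      "z = x2 + t2 *\<^sub>R y" "b = a2 + t2*c" by blast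
    then show "(x + z, a + b) \<in> {(x + t *\<^sub>R y, a + t * c) |x a t. (x, a) \<in> G}"
      using Gadd[of x1 a1 x2 a2]
      by (intro CollectI exI[of _ "x1+x2"] exI[of _ "a1+a2"] exI[of _ "t1+t2"]) (auto simp: algebra_simps)
  next
    fix x a s
    assume "(x, a) \<in> {(x + t *\<^sub>R y, a + t * c) |x a t. (x, a) \<in> G}"
    then obtain x1 a1 t1 where "(x1,a1)\<in>G" "x = x1 + t1 *\<^sub>R y" "a = a1 + t1*c" by blast
    then show "(s *\<^sub>R x, s * a) \<in> {(x + t *\<^sub>R y, a + t * c) |x a t. (x, a) \<in> G}"
      using Gsc[of x1 a1 s]
      by (intro CollectI exI[of _ "s *\<^sub>R x1"] exI[of _ "s*a1"] exI[of _ "s*t1"]) (auto simp: algebra_simps)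
  next
    fix x a b
    assume "(x, a) \<in> {(x + t *\<^sub>R y, a + t * c) |x a t. (x, a) \<in> G}"
       "(x, b) \<in> {(x + t *\<^sub>R y, a + t * c) |x a t. (x, a) \<in> G}"
    then obtain x1 a1 t1 x2 a2 t2 where "(x1,a1)\<in>G" "(x2,a2)\<in>G" "x = x1 + t1 *\<^sub>R y" "a = a1 + t1*c"
      "x = x2 + t2 *\<^sub>R y" "b = a2 + t2*c" by blast
    then show "a = b" using uniq[of x1 a1 x2 a2 t1 t2] by auto
  qed
  show "G \<subseteq> gext G y c"
    unfolding gext_def by force
  show "(y, c) \<in> gext G y c"
    unfolding gext_def using G0 by (intro CollectI exI[of _ 0] exI[of _ 0] exI[of _ 1]) auto
qed

lemma gext_bound:
  fixes G :: "('a::real_normed_vector \<times> real) set" and y :: 'a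
  assumes G: "lgraph G" and bnd: "\<And>x a. (x,a)\<in>G \<Longrightarrow> a \<le> norm x"
  shows "\<And>v e. (v,e) \<in> gext G y (Sup {a - norm (x - y) | x a. (x,a)\<in>G}) \<Longrightarrow> e \<le> norm v"
proof -
  define c where "c = Sup {a - norm (x - y) | x a. (x,a)\<in>G}"
  have G0: "(0,0) \<in> G" using G unfolding lgraph_def by blast
  have Gadd: "\<And>x a z b. (x,a)\<in>G \<Longrightarrow> (z,b)\<in>G \<Longrightarrow> (x+z, a+b) \<in> G" using G unfolding lgraph_def by blast
  have Gsc: "\<And>x a t. (x,a)\<in>G \<Longrightarrow> (t *\<^sub>R x, t*a) \<in> G" using G unfolding lgraph_def by blast
  have key: "a - norm (x - y) \<le> norm (z + y) - b" if "(x,a)\<in>G" "(z,b)\<in>G" for x a z b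
  proof -
    have "a + b \<le> norm (x + z)" using bnd[OF Gadd[OF that]] .
    also have "x + z = (x - y) + (z + y)" by simp
    also have "norm \<dots> \<le> norm (x - y) + norm (z + y)" by (rule norm_triangle_ineq)
    finally show ?thesis by simp
  qed
  let ?S = "{a - norm (x - y) | x a. (x,a)\<in>G}"
  have ne: "?S \<noteq> {}" using G0 by blast
  have bdd: "bdd_above ?S" using key[OF _ G0] unfolding bdd_above_def by auto
  have c_ge: "a - norm (x - y) \<le> c" if "(x,a)\<in>G" for x a
    unfolding c_def using that bdd by (intro cSup_upper) auto
  have c_le: "c \<le> norm (z + y) - b" if "(z,b)\<in>G" for z b
    unfolding c_def using ne key[OF _ that] by (intro cSup_least) auto
  fix v e assume "(v,e) \<in> gext G y (Sup {a - norm (x - y) | x a. (x,a)\<in>G})"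
  then have "(v,e) \<in> gext G y c" by (simp add: c_def)
  then obtain x a t where xa: "(x,a)\<in>G" and v: "v = x + t *\<^sub>R y" and e: "e = a + t*c"
    unfolding gext_def by blast
  consider "t = 0" | "t > 0" | "t < 0" by linarith
  then show "e \<le> norm v"
  proof cases
    case 1 then show ?thesis using bnd[OF xa] v e by simp
  next
    case 2
    have "(inverse t *\<^sub>R x, inverse t * a) \<in> G" using Gsc[OF xa] .
    from c_le[OF this] have "t * c \<le> t * (norm (inverse t *\<^sub>R x + y) - inverse t * a)"
      using 2 by (simp add: mult_left_mono)
    also have "\<dots> = norm (t *\<^sub>R (inverse t *\<^sub>R x + y)) - a"
      using 2 by (simp add: right_diff_distrib)
    also have "t *\<^sub>R (inverse t *\<^sub>R x + y) = x + t *\<^sub>R y" using 2 by (simp add: scaleR_add_right)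
    finally show ?thesis using v e by simp
  next
    case 3
    define s where "s = - t"
    have s: "s > 0" using 3 s_def by simp
    have "(inverse s *\<^sub>R x, inverse s * a) \<in> G" using Gsc[OF xa] .
    from c_ge[OF this] have "s * (inverse s * a - norm (inverse s *\<^sub>R x - y)) \<le> s * c"
      using s by (simp add: mult_left_mono)
    moreover have "s * (inverse s * a - norm (inverse s *\<^sub>R x - y)) = a - norm (s *\<^sub>R (inverse s *\<^sub>R x - y))"
      using s by (simp add: right_diff_distrib)
    moreover have "s *\<^sub>R (inverse s *\<^sub>R x - y) = x + t *\<^sub>R y" using s s_def by (simp add: scaleR_diff_right)
    ultimately have "a - norm v \<le> s * c" using v by simp
    then show ?thesis using e s_def by simp
  qed
qed

lemma lg0: "lgraph G \<Longrightarrow> (0,0) \<in> G" unfolding lgraph_def by blast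
lemma lgadd: "lgraph G \<Longrightarrow> (x,a)\<in>G \<Longrightarrow> (z,b)\<in>G \<Longrightarrow> (x+z, a+b) \<in> G" unfolding lgraph_def by blast
lemma lgsc: "lgraph G \<Longrightarrow> (x,a)\<in>G \<Longrightarrow> (t *\<^sub>R x, t*a) \<in> G" unfolding lgraph_def by blast
lemma lgfun: "lgraph G \<Longrightarrow> (x,a)\<in>G \<Longrightarrow> (x,b)\<in>G \<Longrightarrow> a = b" unfolding lgraph_def by blast
lemma lgI: "(0,0) \<in> G \<Longrightarrow> (\<And>x a z b. (x,a)\<in>G \<Longrightarrow> (z,b)\<in>G \<Longrightarrow> (x+z, a+b) \<in> G)
  \<Longrightarrow> (\<And>x a t. (x,a)\<in>G \<Longrightarrow> (t *\<^sub>R x, t*a) \<in> G) \<Longrightarrow> (\<And>x a b. (x,a)\<in>G \<Longrightarrow> (x,b)\<in>G \<Longrightarrow> a = b)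
  \<Longrightarrow> lgraph G" unfolding lgraph_def by blast

lemma hb_extend:
  fixes G0 :: "('a::real_normed_vector \<times> real) set"
  assumes G0: "lgraph G0" and b0: "\<And>x a. (x,a)\<in>G0 \<Longrightarrow> a \<le> norm x"
  shows "\<exists>f. bounded_linear f \<and> (\<forall>x a. (x,a)\<in>G0 \<longrightarrow> f x = a)"
proof -
  define A where "A = {G. lgraph G \<and> G0 \<subseteq> G \<and> (\<forall>x a. (x,a)\<in>G \<longrightarrow> a \<le> norm x)}"
  have "\<forall>C\<in>chains A. \<exists>U\<in>A. \<forall>X\<in>C. X \<subseteq> U"
  proof
    fix C assume C: "C \<in> chains A"
    show "\<exists>U\<in>A. \<forall>X\<in>C. X \<subseteq> U"
    proof (cases "C = {}")
      case True then show ?thesis using G0 b0 unfolding A_def by blast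
    next
      case False
      have CA: "C \<subseteq> A" and ch: "\<And>X Y. X \<in> C \<Longrightarrow> Y \<in> C \<Longrightarrow> X \<subseteq> Y \<or> Y \<subseteq> X"
        using C unfolding chains_def chain_subset_def by auto
      have lg: "lgraph X" if "X \<in> C" for X using CA that unfolding A_def by blast
      have two: "\<exists>Z\<in>C. p \<in> Z \<and> q \<in> Z" if pq: "p \<in> \<Union>C" "q \<in> \<Union>C" for p q
      proof -
        obtain X Y where XY: "X\<in>C" "Y\<in>C" "p\<in>X" "q\<in>Y" using pq by blast
        from ch[OF XY(1,2)] show ?thesis
        proof
          assume "X \<subseteq> Y" then show ?thesis using XY by blast
        next
          assume "Y \<subseteq> X" then show ?thesis using XY by blast
        qed
      qed
      have "lgraph (\<Union>C)"
      proof (rule lgI)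
        obtain X where "X \<in> C" using False by blast
        then show "(0,0) \<in> \<Union>C" using lg0[OF lg[of X]] by blast
      next
        fix x a z b assume "(x,a) \<in> \<Union>C" "(z,b) \<in> \<Union>C"
        then obtain Z where "Z \<in> C" "(x,a) \<in> Z" "(z,b) \<in> Z" using two by blast
        then show "(x+z,a+b) \<in> \<Union>C" using lgadd[OF lg[of Z]] by blast
      next
        fix x a t assume "(x,a) \<in> \<Union>C"
        then obtain Z where "Z \<in> C" "(x,a) \<in> Z" by blast
        then show "(t *\<^sub>R x, t*a) \<in> \<Union>C" using lgsc[OF lg[of Z]] by blast
      next
        fix x a b assume "(x,a) \<in> \<Union>C" "(x,b) \<in> \<Union>C"
        then obtain Z where "Z \<in> C" "(x,a) \<in> Z" "(x,b) \<in> Z" using two by blast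
        then show "a = b" using lgfun[OF lg[of Z]] by blast
      qed
      moreover have "G0 \<subseteq> \<Union>C" using False CA unfolding A_def by blast
      moreover have "\<forall>x a. (x,a)\<in>\<Union>C \<longrightarrow> a \<le> norm x" using CA unfolding A_def by blast
      moreover have "\<forall>X\<in>C. X \<subseteq> \<Union>C" by blast
      ultimately show ?thesis unfolding A_def by blast
    qed
  qed
  from Zorn_Lemma2[OF this] obtain M where MA: "M \<in> A" and Mmax: "\<And>X. X\<in>A \<Longrightarrow> M \<subseteq> X \<Longrightarrow> X = M"
    by blast
  have M: "lgraph M" "G0 \<subseteq> M" "\<And>x a. (x,a)\<in>M \<Longrightarrow> a \<le> norm x" using MA unfolding A_def by auto
  have dom: "x \<in> Domain M" for x
  proof (rule ccontr)
    assume y: "x \<notin> Domain M"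
    define c where "c = Sup {a - norm (z - x) | z a. (z,a)\<in>M}"
    have l1: "lgraph (gext M x c)" using gext_lgraph(1)[OF M(1) y] .
    have l2: "M \<subseteq> gext M x c" using gext_lgraph(2)[OF M(1) y] .
    have l3: "\<forall>v e. (v,e) \<in> gext M x c \<longrightarrow> e \<le> norm v"
      using gext_bound[where G=M and y=x, OF M(1) M(3)] unfolding c_def by blast
    have "gext M x c \<in> A" unfolding A_def using l1 l2 l3 M(2) by blast
    then have "gext M x c = M" using Mmax l2 by blast
    then show False using gext_lgraph(3)[OF M(1) y, of c] y by blast
  qed
  define f where "f x = (THE a. (x,a) \<in> M)" for x
  have fu: "(x,a) \<in> M \<Longrightarrow> f x = a" for x a
    unfolding f_def using lgfun[OF M(1)] by blast
  have fM: "(x, f x) \<in> M" for x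
  proof -
    obtain a where "(x,a)\<in>M" using dom[of x] by blast
    then show ?thesis using fu by simp
  qed
  have "bounded_linear f"
  proof (rule bounded_linear_intro[where K=1])
    fix x y show "f (x + y) = f x + f y"
      using fu lgadd[OF M(1) fM[of x] fM[of y]] by blast
  next
    fix r x show "f (r *\<^sub>R x) = r *\<^sub>R f x"
      using fu lgsc[OF M(1) fM[of x], of r] by simp
  next
    fix x
    have "f x \<le> norm x" using M(3) fM by blast
    moreover have "f (-x) = - f x"
      using fu lgsc[OF M(1) fM[of x], of "-1"] by simp
    moreover have "f (-x) \<le> norm (-x)" using M(3) fM[of "-x"] by blast
    ultimately show "norm (f x) \<le> norm x * 1" by simp
  qed
  moreover have "\<forall>x a. (x,a)\<in>G0 \<longrightarrow> f x = a" using fu M(2) by blast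
  ultimately show ?thesis by blast
qed

lemma hahn_banach_sep:
  fixes M :: "'a::real_normed_vector set"
  assumes M: "subspace M" and y: "y \<notin> closure M"
  shows "\<exists>f::'a \<Rightarrow>\<^sub>L real. f y \<noteq> 0 \<and> (\<forall>m\<in>M. f m = 0)"
proof -
  have M0: "0 \<in> M" using M subspace_0 by blast
  then have Mne: "M \<noteq> {}" by blast
  define d where "d = infdist y M"
  have "d \<noteq> 0" using y in_closure_iff_infdist_zero[OF Mne] unfolding d_def by blast
  moreover have "d \<ge> 0" unfolding d_def by (rule infdist_nonneg)
  ultimately have d: "d > 0" by linarith
  define H where "H = M \<times> {0::real}"
  have H: "lgraph H"
  proof (rule lgI)
    show "(0,0) \<in> H" unfolding H_def using M0 by simp
  next
    fix x a z b assume "(x,a)\<in>H" "(z,b)\<in>H" then show "(x+z,a+b)\<in>H"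
      unfolding H_def using subspace_add[OF M] by simp
  next
    fix x a t assume "(x,a)\<in>H" then show "(t *\<^sub>R x,t*a)\<in>H"
      unfolding H_def using subspace_scale[OF M] by simp
  next
    fix x a b assume "(x,a)\<in>H" "(x,b)\<in>H" then show "a = b" unfolding H_def by simp
  qed
  have "y \<notin> M" using y closure_subset by blast
  then have yH: "y \<notin> Domain H" unfolding H_def by blast
  define G0 where "G0 = gext H y d"
  have G0: "lgraph G0" using gext_lgraph(1)[OF H yH] unfolding G0_def .
  have b0: "a \<le> norm x" if xa: "(x,a)\<in>G0" for x a
  proof -
    obtain m a' t where m': "(m,a') \<in> H" and x: "x = m + t *\<^sub>R y" and a': "a = a' + t * d"
      using xa unfolding G0_def gext_def by blast
    have m: "m \<in> M" and a: "a = t * d" using m' a' unfolding H_def by auto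
    show ?thesis
    proof (cases "t = 0")
      case True then show ?thesis using a by simp
    next
      case False
      have mm: "- (inverse t *\<^sub>R m) \<in> M" using m subspace_neg[OF M] subspace_scale[OF M] by blast
      have "d \<le> dist y (- (inverse t *\<^sub>R m))" unfolding d_def by (rule infdist_le[OF mm])
      also have "dist y (- (inverse t *\<^sub>R m)) = norm (y + inverse t *\<^sub>R m)" by (simp add: dist_norm)
      finally have "\<bar>t\<bar> * d \<le> \<bar>t\<bar> * norm (y + inverse t *\<^sub>R m)" by (simp add: mult_left_mono)
      also have "\<dots> = norm (t *\<^sub>R (y + inverse t *\<^sub>R m))" by simp
      also have "t *\<^sub>R (y + inverse t *\<^sub>R m) = x" using False x by (simp add: scaleR_add_right add.commute)
      finally have 1: "\<bar>t\<bar> * d \<le> norm x" .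
      have "t * d \<le> \<bar>t\<bar> * d" using d by (simp add: mult_right_mono)
      then show ?thesis using 1 a by linarith
    qed
  qed
  obtain f where f: "bounded_linear f" and fG: "\<And>x a. (x,a)\<in>G0 \<Longrightarrow> f x = a"
    using hb_extend[OF G0 b0] by blast
  have "f y = d" using fG gext_lgraph(3)[OF H yH, of d] unfolding G0_def by blast
  moreover have "f m = 0" if "m \<in> M" for m
  proof -
    have "(m,0) \<in> H" using that unfolding H_def by simp
    then show ?thesis using fG gext_lgraph(2)[OF H yH, of d] unfolding G0_def by blast
  qed
  ultimately show ?thesis using d f by (intro exI[of _ "Blinfun f"]) (auto simp: bounded_linear_Blinfun_apply)
qed


unbundle cardinal_syntax

lemma omega1_Card: "Card_order omega1"
  unfolding omega1_def by (rule cardSuc_Card_order[OF natLeq_Card_order])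

lemma omega1_WO: "Well_order omega1"
  using omega1_Card unfolding card_order_on_def by blast

lemma omega1_total: "\<alpha> \<in> Field omega1 \<Longrightarrow> \<beta> \<in> Field omega1 \<Longrightarrow> \<alpha> \<noteq> \<beta> \<Longrightarrow>
   (\<alpha>,\<beta>) \<in> omega1 \<or> (\<beta>,\<alpha>) \<in> omega1"
  using omega1_WO unfolding well_order_on_def linear_order_on_def total_on_def by blast

lemma omega1_underS_countable: "\<alpha> \<in> Field omega1 \<Longrightarrow> countable (underS omega1 \<alpha>)"
proof -
  assume a: "\<alpha> \<in> Field omega1"
  have "(card_of (underS omega1 \<alpha>)) <o cardSuc natLeq" using card_of_underS[OF omega1_Card a] unfolding omega1_def .
  then have "(card_of (underS omega1 \<alpha>)) \<le>o natLeq"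
    using cardSuc_ordLeq_ordLess[OF natLeq_Card_order card_of_Card_order] by blast
  then show ?thesis using countable_card_le_natLeq by blast
qed

lemma omega1_uncountable: "(card_of (L)) =o omega1 \<Longrightarrow> uncountable L"
proof
  assume L: "(card_of (L)) =o omega1" and c: "countable L"
  then have "(card_of (L)) \<le>o natLeq" using countable_card_le_natLeq by blast
  then have "omega1 \<le>o natLeq" using L ordIso_symmetric ordIso_ordLeq_trans by blast
  moreover have "natLeq <o omega1" unfolding omega1_def by (rule cardSuc_greater[OF natLeq_Card_order])
  ultimately show False using not_ordLess_ordLeq by blast
qed

lemma Field_omega1_iso: "(card_of (Field omega1)) =o omega1"
  by (rule card_of_Field_ordIso[OF omega1_Card])

lemma lepoll_omega1: "(card_of (A)) \<le>o omega1 \<Longrightarrow> A \<lesssim> Field omega1"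
proof -
  assume "(card_of (A)) \<le>o omega1"
  then have "(card_of (A)) \<le>o (card_of (Field omega1))" using Field_omega1_iso ordIso_symmetric ordLeq_ordIso_trans by blast
  then show ?thesis unfolding lepoll_def using card_of_ordLeq by blast
qed

lemma Field_omega1_uncountable: "uncountable (Field omega1)"
  by (rule omega1_uncountable[OF Field_omega1_iso])

lemma times_nat_lepoll:
  assumes "(card_of (D)) =o omega1"
  shows "D \<times> (UNIV::nat set) \<lesssim> Field omega1"
proof -
  have inf: "infinite (Field omega1)" using Field_omega1_uncountable countable_finite by blast
  have "D \<lesssim> Field omega1" using assms lepoll_omega1 ordIso_iff_ordLeq by blast
  moreover have "(UNIV::nat set) \<lesssim> Field omega1" using inf infinite_le_lepoll by blast
  ultimately have "D \<times> (UNIV::nat set) \<lesssim> Field omega1 \<times> Field omega1" by (rule times_lepoll_mono)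
  moreover have "Field omega1 \<times> Field omega1 \<approx> Field omega1"
    using card_of_Times_same_infinite[OF inf] eqpoll_iff_card_of_ordIso by blast
  ultimately show ?thesis using lepoll_trans2 by blast
qed

lemma seq_real_lepoll: "(UNIV :: (nat \<Rightarrow> real) set) \<lesssim> (UNIV :: nat set set)"
proof -
  obtain g :: "real \<Rightarrow> nat set" where g: "bij_betw g UNIV UNIV"
    using nat_sets_eqpoll_reals eqpoll_sym unfolding eqpoll_def by blast
  then have gi: "inj g" using bij_betw_imp_inj_on by blast
  define F where "F s = {prod_encode (n,m) | n m. m \<in> g (s n)}" for s :: "nat \<Rightarrow> real"
  have "inj F"
  proof (rule injI)
    fix s s' assume eq: "F s = F s'"
    have "g (s n) = g (s' n)" for n
    proof -
      have "m \<in> g (s n) \<longleftrightarrow> prod_encode (n,m) \<in> F s" for s m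
        unfolding F_def by (auto dest: inj_onD[OF inj_prod_encode, simplified])
      then show ?thesis using eq by blast
    qed
    then show "s = s'" using gi by (auto simp: inj_def)
  qed
  then show ?thesis unfolding lepoll_def by blast
qed

lemma dual_lepoll:
  assumes CH: "CH" and d: "dens_is (UNIV :: ('a::real_normed_vector) set) omega1"
  shows "(UNIV :: 'a set) \<lesssim> Field omega1"
proof -
  obtain D :: "'a set" where D: "UNIV \<subseteq> closure D" and Dc: "(card_of (D)) =o omega1"
    using d unfolding dens_is_def by blast
  have "(card_of (D)) =o (card_of (UNIV :: real set))" using Dc CH unfolding CH_def
    using ordIso_symmetric ordIso_transitive by blast
  then have "D \<lesssim> (UNIV :: real set)" using eqpoll_iff_card_of_ordIso eqpoll_imp_lepoll by blast
  then obtain h :: "'a \<Rightarrow> real" where h: "inj_on h D" unfolding lepoll_def by blast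
  let ?Q = "{s :: nat \<Rightarrow> 'a. \<forall>n. s n \<in> D}"
  have "(UNIV :: 'a set) \<subseteq> lim ` ?Q"
  proof
    fix f :: 'a
    have "f \<in> closure D" using D by blast
    then obtain s where s: "\<forall>n. s n \<in> D" "s \<longlonglongrightarrow> f" unfolding closure_sequential by blast
    then have "lim s = f" by (simp add: limI)
    then show "f \<in> lim ` ?Q" using s by blast
  qed
  then have "(UNIV :: 'a set) \<lesssim> ?Q" by (rule subset_image_lepoll)
  also have "?Q \<lesssim> (UNIV :: (nat \<Rightarrow> real) set)"
  proof -
    have "inj_on (\<lambda>s. h \<circ> s) ?Q"
    proof (rule inj_onI)
      fix s s' assume "s \<in> ?Q" "s' \<in> ?Q" "h \<circ> s = h \<circ> s'"
      then show "s = s'" using h by (auto simp: fun_eq_iff inj_on_def)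
    qed
    then show ?thesis unfolding lepoll_def by blast
  qed
  also have "\<dots> \<lesssim> (UNIV :: nat set set)" by (rule seq_real_lepoll)
  also have "\<dots> \<approx> (UNIV :: real set)" by (rule nat_sets_eqpoll_reals)
  also have "(UNIV :: real set) \<lesssim> Field omega1"
    using CH unfolding CH_def using lepoll_omega1 ordIso_iff_ordLeq by blast
  finally show ?thesis .
qed




lemma ker_closed: "closed {x. blinfun_apply (f::'a::real_normed_vector \<Rightarrow>\<^sub>L real) x = 0}"
  by (intro closed_Collect_eq continuous_intros)

lemma ker_interior:
  fixes f :: "'a::real_normed_vector \<Rightarrow>\<^sub>L real"
  assumes "f \<noteq> 0"
  shows "interior {x. f x = 0} = {}"
proof (rule ccontr)
  assume "interior {x. f x = 0} \<noteq> {}"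
  then obtain x where "x \<in> interior {x. f x = 0}" by blast
  then obtain e where e: "e > 0" "ball x e \<subseteq> {x. f x = 0}" using mem_interior by blast
  obtain v where v: "f v \<noteq> 0" using assms by (metis blinfun_eqI zero_blinfun.rep_eq)
  then have nv: "norm v > 0" by (metis blinfun.zero_right zero_less_norm_iff)
  define z where "z = x + (e / 2 / norm v) *\<^sub>R v"
  have "dist x z = e/2" unfolding z_def dist_norm using nv e by simp
  then have "z \<in> ball x e" using e by simp
  then have "f z = 0" using e by blast
  moreover have "f x = 0" using e centre_in_ball[of x e] by blast
  moreover have "f z = f x + (e / 2 / norm v) * f v" unfolding z_def by (simp add: blinfun.add_right blinfun.scaleR_right)
  ultimately show False using v e nv by simp
qed

lemma baire_avoid:
  fixes C :: "('a::banach \<Rightarrow>\<^sub>L real) set"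
  assumes C: "countable C" and r: "r > 0"
  shows "\<exists>x\<in>ball c r. \<forall>f\<in>C. f \<noteq> 0 \<longrightarrow> blinfun_apply f x \<noteq> 0"
proof -
  define G where "G = (\<lambda>f::'a \<Rightarrow>\<^sub>L real. {x. f x = 0}) ` {f\<in>C. f \<noteq> 0}"
  have "countable G" unfolding G_def using C by simp
  moreover have "closedin euclidean T \<and> euclidean interior_of T = {}" if "T \<in> G" for T
    using that ker_closed ker_interior unfolding G_def closed_closedin[symmetric] by auto
  ultimately have "euclidean interior_of \<Union>G = {}"
    using Baire_category_alt[of euclidean G] completely_metrizable_space_euclidean by blast
  then have int: "interior (\<Union>G) = {}" by simp
  have "\<not> ball c r \<subseteq> \<Union>G"
  proof
    assume "ball c r \<subseteq> \<Union>G"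
    then have "ball c r \<subseteq> interior (\<Union>G)" by (simp add: interior_maximal)
    then show False using int r by (metis centre_in_ball empty_iff subsetD)
  qed
  then obtain x where "x \<in> ball c r" "x \<notin> \<Union>G" by blast
  then show ?thesis unfolding G_def by blast
qed




theorem theorem4p2:
  assumes "CH"
    and "dens_is (UNIV :: ('a::banach) set) omega1"
    and "dens_is (UNIV :: ('a \<Rightarrow>\<^sub>L real) set) omega1"
  shows "\<exists>S :: 'a set. overcomplete S \<and> closure S = UNIV"
proof -
  let ?\<Omega> = "Field omega1"
  obtain D :: "'a set" where D: "UNIV \<subseteq> closure D" and Dc: "|D| =o omega1"
    using assms(2) unfolding dens_is_def by blast
  have dmin: "omega1 \<le>o |E|" if "UNIV \<subseteq> closure E" for E :: "'a set"
  proof -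
    have "\<forall>D::'a set. D \<subseteq> UNIV \<and> UNIV \<subseteq> closure D \<longrightarrow> omega1 \<le>o |D|"
      using conjunct2[OF assms(2)[unfolded dens_is_def]] .
    then show ?thesis using that by simp
  qed
  obtain \<phi> where \<phi>: "(UNIV :: ('a \<Rightarrow>\<^sub>L real) set) \<subseteq> \<phi> ` ?\<Omega>"
    using dual_lepoll[OF assms(1) assms(3)] unfolding lepoll_iff by blast
  obtain \<psi> where \<psi>: "D \<times> (UNIV :: nat set) \<subseteq> \<psi> ` ?\<Omega>"
    using times_nat_lepoll[OF Dc] unfolding lepoll_iff by blast
  define P where "P \<alpha> x \<longleftrightarrow> x \<in> ball (fst (\<psi> \<alpha>)) (1 / (real (snd (\<psi> \<alpha>)) + 1)) \<and>
     (\<forall>f\<in>\<phi> ` insert \<alpha> (underS omega1 \<alpha>). f \<noteq> 0 \<longrightarrow> blinfun_apply f x \<noteq> 0)" for \<alpha> x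
  have Pex: "\<exists>x. P \<alpha> x" if "\<alpha> \<in> ?\<Omega>" for \<alpha>
  proof -
    have "countable (\<phi> ` insert \<alpha> (underS omega1 \<alpha>))"
      using omega1_underS_countable[OF that] by simp
    from baire_avoid[OF this, of "1 / (real (snd (\<psi> \<alpha>)) + 1)" "fst (\<psi> \<alpha>)"]
    show ?thesis unfolding P_def by auto
  qed
  define x where "x \<alpha> = (SOME y. P \<alpha> y)" for \<alpha>
  have xP: "P \<alpha> (x \<alpha>)" if "\<alpha> \<in> ?\<Omega>" for \<alpha>
    unfolding x_def using Pex[OF that] by (rule someI_ex)
  define S where "S = x ` ?\<Omega>"
  have clS: "closure S = UNIV"
  proof -
    have "z \<in> closure S" for z
    proof (unfold closure_approachable, intro allI impI)
      fix e :: real assume e: "e > 0"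
      have "z \<in> closure D" using D by blast
      then have ap: "\<forall>e>0. \<exists>y\<in>D. dist y z < e" unfolding closure_approachable .
      have e2: "e/2 > 0" using e by simp
      obtain d where d: "d \<in> D" "dist d z < e/2" using ap e2 by blast
      obtain n :: nat where n: "inverse (real (Suc n)) < e/2" using reals_Archimedean[OF e2] by blast
      have "(d, n) \<in> \<psi> ` ?\<Omega>" using \<psi> d(1) by auto
      then obtain \<alpha> where \<alpha>: "\<alpha> \<in> ?\<Omega>" "\<psi> \<alpha> = (d, n)" by (metis imageE)
      have "dist d (x \<alpha>) < 1 / (real n + 1)" using xP[OF \<alpha>(1)] \<alpha>(2) unfolding P_def by simp
      also have "1 / (real n + 1) = inverse (real (Suc n))" by (simp add: divide_inverse add.commute)
      finally have "dist (x \<alpha>) z < e" using d(2) n dist_triangle[of "x \<alpha>" z d] by (simp add: dist_commute)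
      moreover have "x \<alpha> \<in> S" unfolding S_def using \<alpha> by blast
      ultimately show "\<exists>s\<in>S. dist s z < e" by blast
    qed
    then show ?thesis by auto
  qed
  have Sc: "|S| =o omega1"
  proof -
    have "|S| \<le>o |?\<Omega>|" unfolding S_def by (rule card_of_image)
    then have "|S| \<le>o omega1" using Field_omega1_iso ordLeq_ordIso_trans by blast
    moreover have "omega1 \<le>o |S|" using dmin clS by blast
    ultimately show ?thesis using ordIso_iff_ordLeq by blast
  qed
  have "dens_is (UNIV :: 'a set) |S|"
    unfolding dens_is_def
  proof (intro conjI allI impI)
    show "\<exists>D::'a set. D \<subseteq> UNIV \<and> UNIV \<subseteq> closure D \<and> |D| =o |S|"
      using clS card_of_refl[of S] by (intro exI[of _ S]) simp
  next
    fix E :: "'a set" assume "E \<subseteq> UNIV \<and> UNIV \<subseteq> closure E"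
    then have "omega1 \<le>o |E|" using dmin by blast
    then show "|S| \<le>o |E|" using Sc ordIso_ordLeq_trans by blast
  qed
  moreover have "closure (span L) = UNIV" if L: "L \<subseteq> S" "|L| =o |S|" for L
  proof (rule ccontr)
    assume "closure (span L) \<noteq> UNIV"
    then obtain y where y: "y \<notin> closure (span L)" by blast
    obtain f :: "'a \<Rightarrow>\<^sub>L real" where f: "f y \<noteq> 0" "\<forall>m\<in>span L. f m = 0"
      using hahn_banach_sep[OF subspace_span y] by blast
    have f0: "f \<noteq> 0" using f(1) by auto
    obtain \<beta> where \<beta>: "\<beta> \<in> ?\<Omega>" "f = \<phi> \<beta>" using \<phi> by blast
    have "L \<subseteq> x ` underS omega1 \<beta>"
    proof
      fix l assume l: "l \<in> L"
      then obtain \<alpha> where \<alpha>: "\<alpha> \<in> ?\<Omega>" "l = x \<alpha>" using L(1) unfolding S_def by blast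
      have fl: "f l = 0" using f(2) l span_base by blast
      have "\<alpha> \<in> underS omega1 \<beta>"
      proof (rule ccontr)
        assume na: "\<alpha> \<notin> underS omega1 \<beta>"
        have "\<beta> \<in> insert \<alpha> (underS omega1 \<alpha>)"
        proof (cases "\<alpha> = \<beta>")
          case False
          then have "(\<beta>, \<alpha>) \<in> omega1" using omega1_total[OF \<alpha>(1) \<beta>(1)] na unfolding underS_def by blast
          then show ?thesis using False unfolding underS_def by blast
        qed simp
        then have fin: "f \<in> \<phi> ` insert \<alpha> (underS omega1 \<alpha>)" using \<beta>(2) by blast
        have "\<forall>f\<in>\<phi> ` insert \<alpha> (underS omega1 \<alpha>). f \<noteq> 0 \<longrightarrow> blinfun_apply f (x \<alpha>) \<noteq> 0"
          using xP[OF \<alpha>(1)] unfolding P_def by (rule conjunct2)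
        then have "f \<noteq> 0 \<longrightarrow> f (x \<alpha>) \<noteq> 0" using fin by (rule bspec)
        then have "f (x \<alpha>) \<noteq> 0" using f0 by (rule mp)
        then show False using fl \<alpha>(2) by simp
      qed
      then show "l \<in> x ` underS omega1 \<beta>" using \<alpha>(2) by blast
    qed
    moreover have "countable (x ` underS omega1 \<beta>)"
      using omega1_underS_countable[OF \<beta>(1)] by (rule countable_image)
    ultimately have "countable L" by (rule countable_subset)
    moreover have "|L| =o omega1" using L(2) Sc ordIso_transitive by blast
    ultimately show False using omega1_uncountable by blast
  qed
  ultimately have "overcomplete S" unfolding overcomplete_def by blast
  then show ?thesis using clS by blast
qed


end
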